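(* Let $G$ be a non-compact, compactly generated tdlc group and $\Gamma$ a Cayley–Abels graph for $G$ of valency $d$. Let $K\le G$ be the kernel of the action of $G$ on $\Gamma$ and let $L\le\operatorname{Sym}(d)$ be the local action of $G$ on $\Gamma$. If a prime $p$ lies in the local prime content of $G/K$, then $p$ divides the order of the stabilizer in $L$ of some point of $\{1,\dots,d\}$. In particular, the local prime content of $G/K$ is finite.
   Context: A Cayley–Abels graph for a tdlc group $G$ is a locally finite, connected simple graph together with a vertex-transitive action of $G$ by graph automorphisms with compact open vertex stabilizers; its valency $d$ is the number of neighbours of each vertex. The kernel $K$ is the set of elements fixing all vertices. The local action of $G$ is the permutation group $G_\alpha/(G_\alpha\cap G_{\mathbf{N}(\alpha)})\le\operatorname{Sym}(\mathbf{N}(\alpha))$ induced by the vertex stabilizer $G_\alpha$ on the neighbour set $\mathbf{N}(\alpha)$, identified with a subgroup of $\operatorname{Sym}(d)$ via a bijection $\mathbf{N}(\alpha)\to\{1,\dots,d\}$ (well-defined up to conjugacy and independent of $\alpha$). The local prime content of a tdlc group $H$ is the set of primes $p$ such that every compact open subgroup $U\le H$ contains a compact open subgroup $V\le U$ with $p\mid[U:V]$. *)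

theory Defs
  imports "HOL-Analysis.Analysis" "HOL-Algebra.Algebra"
begin

definition topological_group :: "('g, 'b) monoid_scheme \<Rightarrow> 'g topology \<Rightarrow> bool" where
  "topological_group G T \<longleftrightarrow> group G \<and> topspace T = carrier G \<and>
     continuous_map (prod_topology T T) T (\<lambda>(x, y). x \<otimes>\<^bsub>G\<^esub> y) \<and>
     continuous_map T T (\<lambda>x. inv\<^bsub>G\<^esub> x)"

definition tdlc_group :: "('g, 'b) monoid_scheme \<Rightarrow> 'g topology \<Rightarrow> bool" where
  "tdlc_group G T \<longleftrightarrow> topological_group G T \<and> Hausdorff_space T \<and>
     locally_compact_space T \<and>
     (\<forall>x \<in> topspace T. connected_component_of_set T x = {x})"

definition compactly_generated :: "('g, 'b) monoid_scheme \<Rightarrow> 'g topology \<Rightarrow> bool" where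
  "compactly_generated G T \<longleftrightarrow>
     (\<exists>C. C \<subseteq> carrier G \<and> compactin T C \<and> generate G C = carrier G)"

definition compact_open_subgroup :: "('g, 'b) monoid_scheme \<Rightarrow> 'g topology \<Rightarrow> 'g set \<Rightarrow> bool" where
  "compact_open_subgroup G T U \<longleftrightarrow> subgroup U G \<and> compactin T U \<and> openin T U"

definition subgroup_index :: "('g, 'b) monoid_scheme \<Rightarrow> 'g set \<Rightarrow> 'g set \<Rightarrow> nat" where
  "subgroup_index G U V = card {V #>\<^bsub>G\<^esub> u | u. u \<in> U}"

definition local_prime_content :: "('g, 'b) monoid_scheme \<Rightarrow> 'g topology \<Rightarrow> nat set" where
  "local_prime_content G T = {p. Factorial_Ring.prime p \<and>
     (\<forall>U. compact_open_subgroup G T U \<longrightarrow>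
        (\<exists>V. compact_open_subgroup G T V \<and> V \<subseteq> U \<and> p dvd subgroup_index G U V))}"

definition quotient_group_topology :: "('g, 'b) monoid_scheme \<Rightarrow> 'g topology \<Rightarrow> 'g set \<Rightarrow> 'g set topology" where
  "quotient_group_topology G T K =
     topology (\<lambda>\<U>. \<U> \<subseteq> rcosets\<^bsub>G\<^esub> K \<and> openin T (\<Union>\<U>))"

definition neighbours :: "('v \<Rightarrow> 'v \<Rightarrow> bool) \<Rightarrow> 'v set \<Rightarrow> 'v \<Rightarrow> 'v set" where
  "neighbours E V a = {b \<in> V. E a b}"

definition cayley_abels_graph ::
  "('g, 'b) monoid_scheme \<Rightarrow> 'g topology \<Rightarrow> 'v set \<Rightarrow> ('v \<Rightarrow> 'v \<Rightarrow> bool) \<Rightarrow> ('g \<Rightarrow> 'v \<Rightarrow> 'v) \<Rightarrow> bool" where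
  "cayley_abels_graph G T V E \<phi> \<longleftrightarrow>
     \<comment> \<open>simple graph\<close>
     V \<noteq> {} \<and>
     (\<forall>a b. E a b \<longrightarrow> a \<in> V \<and> b \<in> V) \<and>
     (\<forall>a b. E a b \<longrightarrow> E b a) \<and> (\<forall>a. \<not> E a a) \<and>
     \<comment> \<open>locally finite\<close>
     (\<forall>a \<in> V. finite (neighbours E V a)) \<and>
     \<comment> \<open>connected\<close>
     (\<forall>a \<in> V. \<forall>b \<in> V. (\<lambda>x y. E x y)\<^sup>*\<^sup>* a b) \<and>
     \<comment> \<open>action of G by graph automorphisms\<close>
     group_action G V \<phi> \<and>
     (\<forall>g \<in> carrier G. \<forall>a \<in> V. \<forall>b \<in> V. E (\<phi> g a) (\<phi> g b) \<longleftrightarrow> E a b) \<and>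
     \<comment> \<open>vertex transitive\<close>
     (\<forall>a \<in> V. \<forall>b \<in> V. \<exists>g \<in> carrier G. \<phi> g a = b) \<and>
     \<comment> \<open>compact open vertex stabilizers\<close>
     (\<forall>a \<in> V. compactin T (stabilizer G \<phi> a) \<and> openin T (stabilizer G \<phi> a))"

definition valency :: "('v \<Rightarrow> 'v \<Rightarrow> bool) \<Rightarrow> 'v set \<Rightarrow> nat \<Rightarrow> bool" where
  "valency E V d \<longleftrightarrow> (\<forall>a \<in> V. card (neighbours E V a) = d)"

definition action_kernel :: "('g, 'b) monoid_scheme \<Rightarrow> 'v set \<Rightarrow> ('g \<Rightarrow> 'v \<Rightarrow> 'v) \<Rightarrow> 'g set" where
  "action_kernel G V \<phi> = {g \<in> carrier G. \<forall>a \<in> V. \<phi> g a = a}"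

(* local action at vertex a, transported to Sym({1..d}) via a bijection
   bj : N(a) \<rightarrow> {1..d}; permutations are functions nat \<Rightarrow> nat that are the identity
   outside {1..d}. *)
definition local_action ::
  "('g, 'b) monoid_scheme \<Rightarrow> 'v set \<Rightarrow> ('v \<Rightarrow> 'v \<Rightarrow> bool) \<Rightarrow> ('g \<Rightarrow> 'v \<Rightarrow> 'v) \<Rightarrow> 'v \<Rightarrow> nat \<Rightarrow> ('v \<Rightarrow> nat)
     \<Rightarrow> (nat \<Rightarrow> nat) set" where
  "local_action G V E \<phi> a d bj =
     {(\<lambda>i. if i \<in> {1..d} then bj (\<phi> g (inv_into (neighbours E V a) bj i)) else i)
      | g. g \<in> stabilizer G \<phi> a}"

end

theory Submission
  imports Defs
begin


lemma (in group) coset_cancel1: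
  assumes "M \<subseteq> carrier G" "g \<in> carrier G" "h \<in> carrier G"
  shows "M #> g #> inv h #> h = M #> g"
proof -
  have "M #> g #> inv h #> h = M #> (g \<otimes> inv h \<otimes> h)"
    using assms by (simp add: coset_mult_assoc r_coset_subset_G)
  also have "g \<otimes> inv h \<otimes> h = g" using assms by (simp add: m_assoc)
  finally show ?thesis .
qed

lemma (in group) coset_cancel2:
  assumes "M \<subseteq> carrier G" "g \<in> carrier G" "h \<in> carrier G"
  shows "M #> g #> h #> inv h = M #> g"
proof -
  have "M #> g #> h #> inv h = M #> (g \<otimes> h \<otimes> inv h)"
    using assms by (simp add: coset_mult_assoc r_coset_subset_G)
  also have "g \<otimes> h \<otimes> inv h = g" using assms by (simp add: m_assoc)
  finally show ?thesis .
qed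

lemma (in group) idx_mult:
  assumes H: "subgroup H G" and J: "subgroup J G" and I: "subgroup I G"
    and HJ: "H \<subseteq> J" and JI: "J \<subseteq> I"
  shows "subgroup_index G I H = subgroup_index G I J * subgroup_index G J H"
proof -
  define Xs where "Xs = {H #> u | u. u \<in> I}"
  define Ys where "Ys = {H #> j | j. j \<in> J}"
  define Zs where "Zs = {J #> v | v. v \<in> I}"
  define cls where "cls S = {H #> u | u. u \<in> S}" for S
  define C where "C = cls ` Zs"
  have Hc: "H \<subseteq> carrier G" using H subgroup.subset by blast
  have Jc: "J \<subseteq> carrier G" using J subgroup.subset by blast
  have Ic: "I \<subseteq> carrier G" using I subgroup.subset by blast
  have f1: "\<Union>(cls (J #> v)) = J #> v" if v: "v \<in> I" for v
  proof
    show "\<Union> (cls (J #> v)) \<subseteq> J #> v"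
    proof
      fix x assume "x \<in> \<Union> (cls (J #> v))"
      then obtain u where u: "u \<in> J #> v" "x \<in> H #> u" unfolding cls_def by auto
      obtain j where j: "j \<in> J" "u = j \<otimes> v" using u(1) unfolding r_coset_def by auto
      obtain h where h: "h \<in> H" "x = h \<otimes> u" using u(2) unfolding r_coset_def by auto
      have "h \<in> carrier G" "j \<in> carrier G" "v \<in> carrier G" using h j Hc Jc Ic v by auto
      hence "x = (h \<otimes> j) \<otimes> v" using h j by (simp add: m_assoc)
      moreover have "h \<otimes> j \<in> J" using subgroup.m_closed[OF J, of h j] h j HJ by auto
      ultimately show "x \<in> J #> v" unfolding r_coset_def by auto
    qed
  next
    show "J #> v \<subseteq> \<Union> (cls (J #> v))"
    proof
      fix x assume x: "x \<in> J #> v"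
      have "x \<in> carrier G" using x r_coset_subset_G[OF Jc, of v] Ic v by auto
      hence "x \<in> H #> x" using rcosI[of \<one> H x] H subgroup.one_closed Hc by fastforce
      thus "x \<in> \<Union> (cls (J #> v))" using x unfolding cls_def by auto
    qed
  qed
  have f2: "inj_on cls Zs"
  proof (rule inj_onI)
    fix S1 S2 assume "S1 \<in> Zs" "S2 \<in> Zs" "cls S1 = cls S2"
    then obtain v1 v2 where "v1 \<in> I" "v2 \<in> I" "S1 = J #> v1" "S2 = J #> v2" "cls S1 = cls S2"
      unfolding Zs_def by auto
    then show "S1 = S2" by (metis f1)
  qed
  have f3: "\<Union>C = Xs"
  proof
    show "\<Union>C \<subseteq> Xs"
    proof
      fix x assume "x \<in> \<Union>C"
      then obtain v u where v: "v \<in> I" "u \<in> J #> v" "x = H #> u"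
        unfolding C_def Zs_def cls_def by auto
      obtain j where j: "j \<in> J" "u = j \<otimes> v" using v(2) unfolding r_coset_def by auto
      have "u \<in> I" using subgroup.m_closed[OF I, of j v] j v JI by auto
      thus "x \<in> Xs" using v unfolding Xs_def by auto
    qed
  next
    show "Xs \<subseteq> \<Union>C"
    proof
      fix x assume "x \<in> Xs"
      then obtain u where u: "u \<in> I" "x = H #> u" unfolding Xs_def by auto
      have "u \<in> J #> u" using rcosI[of \<one> J u] J subgroup.one_closed Jc Ic u by fastforce
      thus "x \<in> \<Union>C" using u unfolding C_def Zs_def cls_def by blast
    qed
  qed
  have f4: "card c = card Ys" if c: "c \<in> C" for c
  proof -
    obtain v where v: "v \<in> I" "c = cls (J #> v)" using c unfolding C_def Zs_def by auto
    have vc: "v \<in> carrier G" using v Ic by auto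
    have ceq: "c = (\<lambda>j. H #> (j \<otimes> v)) ` J"
      unfolding v cls_def r_coset_def by auto
    have "bij_betw (\<lambda>S. S #> inv v) c Ys"
    proof (rule bij_betw_byWitness[where f'="\<lambda>S. S #> v"])
      show "\<forall>a\<in>c. a #> inv v #> v = a"
        using ceq Hc Jc vc coset_cancel1 by auto
      show "\<forall>a\<in>Ys. a #> v #> inv v = a"
        using Hc Jc vc coset_cancel2 unfolding Ys_def by auto
      show "(\<lambda>S. S #> inv v) ` c \<subseteq> Ys"
      proof
        fix S assume "S \<in> (\<lambda>S. S #> inv v) ` c"
        then obtain j where j: "j \<in> J" "S = H #> (j \<otimes> v) #> inv v" using ceq by auto
        have "S = H #> j" using j Hc Jc vc by (auto simp: coset_mult_assoc m_assoc)
        thus "S \<in> Ys" using j unfolding Ys_def by auto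
      qed
      show "(\<lambda>S. S #> v) ` Ys \<subseteq> c"
        using Hc Jc vc unfolding Ys_def ceq by (auto simp: coset_mult_assoc)
    qed
    thus ?thesis by (simp add: bij_betw_same_card)
  qed
  have f5: "c1 \<inter> c2 = {}" if c1C: "c1 \<in> C" and c2C: "c2 \<in> C" and cne: "c1 \<noteq> c2" for c1 c2
  proof (rule ccontr)
    assume ne: "c1 \<inter> c2 \<noteq> {}"
    obtain v1 where v1: "v1 \<in> I" "c1 = cls (J #> v1)" using c1C unfolding C_def Zs_def by auto
    obtain v2 where v2: "v2 \<in> I" "c2 = cls (J #> v2)" using c2C unfolding C_def Zs_def by auto
    obtain S where S: "S \<in> c1" "S \<in> c2" using ne by auto
    obtain u1 where u1: "u1 \<in> J #> v1" "S = H #> u1" using S v1 unfolding cls_def by auto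
    obtain u2 where u2: "u2 \<in> J #> v2" "S = H #> u2" using S v2 unfolding cls_def by auto
    have u1c: "u1 \<in> carrier G" using u1 r_coset_subset_G[OF Jc, of v1] Ic v1 by auto
    have "u1 \<in> H #> u1" using rcosI[of \<one> H u1] H subgroup.one_closed Hc u1c by fastforce
    hence "u1 \<in> \<Union>(cls (J #> v2))" using u1 u2 unfolding cls_def by auto
    hence "u1 \<in> J #> v2" using f1 v2 by auto
    hence "(J #> v1) \<inter> (J #> v2) \<noteq> {}" using u1 by auto
    moreover have "J #> v1 \<in> rcosets J" "J #> v2 \<in> rcosets J"
      using rcosetsI Jc Ic v1 v2 by auto
    ultimately have "J #> v1 = J #> v2"
      using rcos_disjoint[OF J] unfolding pairwise_def disjnt_def by blast
    thus False using cne v1 v2 by simp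
  qed
  have cardC: "card C = card Zs" unfolding C_def using f2 card_image by blast
  have Ysne: "Ys \<noteq> {}" unfolding Ys_def using J subgroup.one_closed by blast
  have "card Xs = card Zs * card Ys"
  proof (cases "finite Xs")
    case True
    have "finite (\<Union>C)" using True f3 by simp
    hence "finite C" by (rule finite_UnionD)
    have "card Ys * card C = card (\<Union>C)"
      using card_partition[OF \<open>finite C\<close>] f3 True f4 f5 by blast
    thus ?thesis using f3 cardC by (simp add: mult.commute)
  next
    case False
    show ?thesis
    proof (cases "finite C \<and> finite Ys")
      case True
      have "card Ys > 0" using True Ysne by (simp add: card_gt_0_iff)
      hence "\<forall>c\<in>C. finite c" using f4 by (metis card_ge_0_finite)
      hence "finite (\<Union>C)" using True by auto
      thus ?thesis using False f3 by simp
    next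
      case False2: False
      then consider "\<not> finite C" | "\<not> finite Ys" by blast
      then show ?thesis
      proof cases
        case 1 thus ?thesis using cardC False by auto
      next
        case 2 thus ?thesis using False by simp
      qed
    qed
  qed
  thus ?thesis unfolding subgroup_index_def Xs_def Ys_def Zs_def by simp
qed



definition Fix :: "('g,'b) monoid_scheme \<Rightarrow> ('g \<Rightarrow> 'v \<Rightarrow> 'v) \<Rightarrow> 'v set \<Rightarrow> 'g set" where
  "Fix G \<phi> S = {g \<in> carrier G. \<forall>s\<in>S. \<phi> g s = s}"

definition Res :: "('g \<Rightarrow> 'v \<Rightarrow> 'v) \<Rightarrow> 'v set \<Rightarrow> 'g set \<Rightarrow> ('v \<Rightarrow> 'v) set" where
  "Res \<phi> S J = (\<lambda>g. restrict (\<phi> g) S) ` J"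

lemma card_images_eq:
  assumes "\<And>u v. u \<in> A \<Longrightarrow> v \<in> A \<Longrightarrow> f u = f v \<longleftrightarrow> g u = g v"
  shows "card (f ` A) = card (g ` A)"
proof -
  have "bij_betw (\<lambda>y. g (inv_into A f y)) (f ` A) (g ` A)"
  proof (rule bij_betw_byWitness[where f'="\<lambda>z. f (inv_into A g z)"])
    show "\<forall>a\<in>f ` A. f (inv_into A g (g (inv_into A f a))) = a"
    proof
      fix a assume a: "a \<in> f ` A"
      have i1: "inv_into A f a \<in> A" using a inv_into_into by metis
      have "g (inv_into A f a) \<in> g ` A" using i1 by blast
      hence i2: "inv_into A g (g (inv_into A f a)) \<in> A" "g (inv_into A g (g (inv_into A f a))) = g (inv_into A f a)"
        using inv_into_into f_inv_into_f by metis+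
      hence "f (inv_into A g (g (inv_into A f a))) = f (inv_into A f a)" using assms i1 by blast
      also have "\<dots> = a" using a f_inv_into_f by metis
      finally show "f (inv_into A g (g (inv_into A f a))) = a" .
    qed
    show "\<forall>a\<in>g ` A. g (inv_into A f (f (inv_into A g a))) = a"
    proof
      fix a assume a: "a \<in> g ` A"
      have i1: "inv_into A g a \<in> A" using a inv_into_into by metis
      have "f (inv_into A g a) \<in> f ` A" using i1 by blast
      hence i2: "inv_into A f (f (inv_into A g a)) \<in> A" "f (inv_into A f (f (inv_into A g a))) = f (inv_into A g a)"
        using inv_into_into f_inv_into_f by metis+
      hence "g (inv_into A f (f (inv_into A g a))) = g (inv_into A g a)" using assms i1 by blast
      also have "\<dots> = a" using a f_inv_into_f by metis
      finally show "g (inv_into A f (f (inv_into A g a))) = a" .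
    qed
    show "(\<lambda>y. g (inv_into A f y)) ` f ` A \<subseteq> g ` A"
      by (auto intro!: imageI inv_into_into)
    show "(\<lambda>z. f (inv_into A g z)) ` g ` A \<subseteq> f ` A"
      by (auto intro!: imageI inv_into_into)
  qed
  thus ?thesis by (rule bij_betw_same_card)
qed

context group_action
begin

lemma grp: "group G" using group_hom group_hom.axioms(1) by auto

lemma act_closed: "g \<in> carrier G \<Longrightarrow> x \<in> E \<Longrightarrow> \<phi> g x \<in> E"
  using element_image by blast

lemma act_mult: "g \<in> carrier G \<Longrightarrow> h \<in> carrier G \<Longrightarrow> x \<in> E \<Longrightarrow> \<phi> (g \<otimes> h) x = \<phi> g (\<phi> h x)"
  using composition_rule by blast

lemma act_inv1: "g \<in> carrier G \<Longrightarrow> x \<in> E \<Longrightarrow> \<phi> (inv g) (\<phi> g x) = x"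
  using orbit_sym_aux by blast

lemma act_inv2: "g \<in> carrier G \<Longrightarrow> x \<in> E \<Longrightarrow> \<phi> g (\<phi> (inv g) x) = x"
proof -
  assume g: "g \<in> carrier G" and x: "x \<in> E"
  interpret group G by (rule grp)
  have "\<phi> (inv (inv g)) (\<phi> (inv g) x) = x" using act_inv1[of "inv g" x] g x by simp
  thus ?thesis using g by simp
qed

lemma act_one: "x \<in> E \<Longrightarrow> \<phi> \<one> x = x"
  using id_eq_one by (metis restrict_apply)

lemma Fix_subgroup:
  assumes S: "S \<subseteq> E" shows "subgroup (Fix G \<phi> S) G"
proof -
  interpret group G by (rule grp)
  show ?thesis
  proof (rule subgroupI)
    show "Fix G \<phi> S \<subseteq> carrier G" unfolding Fix_def by auto
    show "Fix G \<phi> S \<noteq> {}" using act_one S unfolding Fix_def by auto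
    show "inv a \<in> Fix G \<phi> S" if "a \<in> Fix G \<phi> S" for a
      using that act_inv1 S unfolding Fix_def by force
    show "a \<otimes> b \<in> Fix G \<phi> S" if "a \<in> Fix G \<phi> S" "b \<in> Fix G \<phi> S" for a b
      using that act_mult S unfolding Fix_def by force
  qed
qed

lemma coset_char:
  assumes J: "subgroup J G" and S: "S \<subseteq> E" and g: "g \<in> J"
  shows "(J \<inter> Fix G \<phi> S) #> g = {x \<in> J. \<forall>s\<in>S. \<phi> (inv x) s = \<phi> (inv g) s}"
proof -
  interpret group G by (rule grp)
  have Jc: "J \<subseteq> carrier G" using J subgroup.subset by blast
  have gc: "g \<in> carrier G" using g Jc by auto
  show ?thesis
  proof
    show "(J \<inter> Fix G \<phi> S) #> g \<subseteq> {x \<in> J. \<forall>s\<in>S. \<phi> (inv x) s = \<phi> (inv g) s}"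
    proof
      fix x assume "x \<in> (J \<inter> Fix G \<phi> S) #> g"
      then obtain k where k: "k \<in> J" "k \<in> Fix G \<phi> S" "x = k \<otimes> g" unfolding r_coset_def by auto
      have kc: "k \<in> carrier G" using k Jc by auto
      have "x \<in> J" using k g subgroup.m_closed[OF J] by auto
      moreover have "\<phi> (inv x) s = \<phi> (inv g) s" if s: "s \<in> S" for s
      proof -
        have "inv x = inv g \<otimes> inv k" using k kc gc by (simp add: inv_mult_group)
        hence "\<phi> (inv x) s = \<phi> (inv g) (\<phi> (inv k) s)" using act_mult kc gc s S by auto
        moreover have "\<phi> (inv k) s = s" using act_inv1[OF kc, of s] k(2) s S unfolding Fix_def by auto
        ultimately show ?thesis by simp
      qed
      ultimately show "x \<in> {x \<in> J. \<forall>s\<in>S. \<phi> (inv x) s = \<phi> (inv g) s}" by blast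
    qed
    show "{x \<in> J. \<forall>s\<in>S. \<phi> (inv x) s = \<phi> (inv g) s} \<subseteq> (J \<inter> Fix G \<phi> S) #> g"
    proof
      fix x assume x: "x \<in> {x \<in> J. \<forall>s\<in>S. \<phi> (inv x) s = \<phi> (inv g) s}"
      have xc: "x \<in> carrier G" using x Jc by auto
      define k where "k = x \<otimes> inv g"
      have kc: "k \<in> carrier G" unfolding k_def using xc gc by simp
      have kJ: "k \<in> J" unfolding k_def using x g subgroup.m_closed[OF J] subgroup.m_inv_closed[OF J] by auto
      have "\<phi> k s = s" if s: "s \<in> S" for s
      proof -
        have "\<phi> k s = \<phi> x (\<phi> (inv g) s)" unfolding k_def using act_mult xc gc s S by auto
        also have "\<dots> = \<phi> x (\<phi> (inv x) s)" using x s by auto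
        also have "\<dots> = s" using act_inv2 xc s S by auto
        finally show ?thesis .
      qed
      hence "k \<in> J \<inter> Fix G \<phi> S" using kJ kc unfolding Fix_def by auto
      moreover have "x = k \<otimes> g" unfolding k_def using xc gc by (simp add: m_assoc)
      ultimately show "x \<in> (J \<inter> Fix G \<phi> S) #> g" unfolding r_coset_def by auto
    qed
  qed
qed

lemma idx_Res:
  assumes J: "subgroup J G" and S: "S \<subseteq> E"
  shows "subgroup_index G J (J \<inter> Fix G \<phi> S) = card (Res \<phi> S J)"
proof -
  interpret group G by (rule grp)
  let ?H = "J \<inter> Fix G \<phi> S"
  have Jc: "J \<subseteq> carrier G" using J subgroup.subset by blast
  have "{?H #> u | u. u \<in> J} = (\<lambda>u. ?H #> u) ` J" by auto
  moreover have "card ((\<lambda>u. ?H #> u) ` J) = card ((\<lambda>u. restrict (\<phi> (inv u)) S) ` J)"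
  proof (rule card_images_eq)
    fix u v assume u: "u \<in> J" and v: "v \<in> J"
    show "(?H #> u = ?H #> v) \<longleftrightarrow> (restrict (\<phi> (inv u)) S = restrict (\<phi> (inv v)) S)"
    proof
      assume eq: "?H #> u = ?H #> v"
      have "v \<in> ?H #> v" using coset_char[OF J S v] v by auto
      hence "v \<in> ?H #> u" using eq by simp
      hence "\<forall>s\<in>S. \<phi> (inv v) s = \<phi> (inv u) s" using coset_char[OF J S u] by auto
      thus "restrict (\<phi> (inv u)) S = restrict (\<phi> (inv v)) S" by (auto simp: restrict_def)
    next
      assume eq: "restrict (\<phi> (inv u)) S = restrict (\<phi> (inv v)) S"
      hence "\<forall>s\<in>S. \<phi> (inv u) s = \<phi> (inv v) s" by (metis restrict_apply)
      thus "?H #> u = ?H #> v" using coset_char[OF J S u] coset_char[OF J S v] by auto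
    qed
  qed
  moreover have "(\<lambda>u. restrict (\<phi> (inv u)) S) ` J = Res \<phi> S J"
  proof -
    have "(\<lambda>x. inv x) ` J = J"
    proof
      show "(\<lambda>x. inv x) ` J \<subseteq> J" using subgroup.m_inv_closed[OF J] by auto
      show "J \<subseteq> (\<lambda>x. inv x) ` J"
      proof
        fix x assume x: "x \<in> J"
        hence "x = inv (inv x)" using Jc by auto
        thus "x \<in> (\<lambda>x. inv x) ` J" using x subgroup.m_inv_closed[OF J] by blast
      qed
    qed
    have "(\<lambda>u. restrict (\<phi> (inv u)) S) ` J = (\<lambda>g. restrict (\<phi> g) S) ` ((\<lambda>x. inv x) ` J)" by (simp add: image_image)
    thus ?thesis unfolding Res_def using \<open>(\<lambda>x. inv x) ` J = J\<close> by simp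
  qed
  ultimately show ?thesis unfolding subgroup_index_def by simp
qed

end


context group_action
begin

lemma Res_dvd:
  assumes J: "subgroup J G" and M: "subgroup M G" and JM: "J \<subseteq> M" and S: "S \<subseteq> E"
    and inv: "\<And>g x. g \<in> M \<Longrightarrow> x \<in> S \<Longrightarrow> \<phi> g x \<in> S"
  shows "card (Res \<phi> S J) dvd card (Res \<phi> S M)"
proof -
  interpret group G by (rule grp)
  have Mc: "M \<subseteq> carrier G" using M subgroup.subset by blast
  define JN where "JN = {g \<in> M. \<exists>j\<in>J. \<forall>x\<in>S. \<phi> g x = \<phi> j x}"
  have JNsub: "subgroup JN G"
  proof (rule subgroupI)
    show "JN \<subseteq> carrier G" unfolding JN_def using Mc by auto
    show "JN \<noteq> {}" unfolding JN_def using subgroup.one_closed[OF J] subgroup.one_closed[OF M] by blast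
    show "inv g \<in> JN" if g: "g \<in> JN" for g
    proof -
      obtain j where j: "j \<in> J" "\<forall>x\<in>S. \<phi> g x = \<phi> j x" using g unfolding JN_def by auto
      have gM: "g \<in> M" using g unfolding JN_def by auto
      have gc: "g \<in> carrier G" and jc: "j \<in> carrier G" and jM: "j \<in> M" using gM j Mc JM by auto
      have "\<phi> (inv g) x = \<phi> (inv j) x" if x: "x \<in> S" for x
      proof -
        define y where "y = \<phi> (inv j) x"
        have yS: "y \<in> S" unfolding y_def using inv[OF subgroup.m_inv_closed[OF M jM] x] .
        have "\<phi> g y = \<phi> j y" using j yS by auto
        also have "\<dots> = x" unfolding y_def using act_inv2 jc x S by auto
        finally have "\<phi> (inv g) x = \<phi> (inv g) (\<phi> g y)" by simp
        also have "\<dots> = y" using act_inv1 gc yS S by auto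
        finally show ?thesis unfolding y_def .
      qed
      thus ?thesis unfolding JN_def using subgroup.m_inv_closed[OF M gM] subgroup.m_inv_closed[OF J j(1)] by blast
    qed
    show "a \<otimes> b \<in> JN" if a: "a \<in> JN" and b: "b \<in> JN" for a b
    proof -
      obtain ja where ja: "ja \<in> J" "\<forall>x\<in>S. \<phi> a x = \<phi> ja x" using a unfolding JN_def by auto
      obtain jb where jb: "jb \<in> J" "\<forall>x\<in>S. \<phi> b x = \<phi> jb x" using b unfolding JN_def by auto
      have aM: "a \<in> M" and bM: "b \<in> M" using a b unfolding JN_def by auto
      have c: "a \<in> carrier G" "b \<in> carrier G" "ja \<in> carrier G" "jb \<in> carrier G" using aM bM ja jb JM Mc by auto
      have "\<phi> (a \<otimes> b) x = \<phi> (ja \<otimes> jb) x" if x: "x \<in> S" for x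
      proof -
        have bx: "\<phi> b x \<in> S" using inv[OF bM x] .
        have "\<phi> (a \<otimes> b) x = \<phi> a (\<phi> b x)" using act_mult c x S by auto
        also have "\<dots> = \<phi> ja (\<phi> jb x)" using ja jb bx x by auto
        also have "\<dots> = \<phi> (ja \<otimes> jb) x" using act_mult c x S by auto
        finally show ?thesis .
      qed
      moreover have "ja \<otimes> jb \<in> J" using subgroup.m_closed[OF J ja(1) jb(1)] .
      moreover have "a \<otimes> b \<in> M" using subgroup.m_closed[OF M aM bM] .
      ultimately show ?thesis unfolding JN_def by blast
    qed
  qed
  define N where "N = M \<inter> Fix G \<phi> S"
  have Nsub: "subgroup N G" unfolding N_def using subgroups_Inter_pair[OF M Fix_subgroup[OF S]] by simp
  have NJN: "N \<subseteq> JN"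
  proof
    fix g assume g: "g \<in> N"
    have "\<forall>x\<in>S. \<phi> g x = \<phi> \<one> x" using g act_one S unfolding N_def Fix_def by auto
    thus "g \<in> JN" using g subgroup.one_closed[OF J] unfolding JN_def N_def by blast
  qed
  have JNM: "JN \<subseteq> M" unfolding JN_def by auto
  have JNN: "JN \<inter> Fix G \<phi> S = N" using NJN JNM unfolding N_def by auto
  have ResJN: "Res \<phi> S JN = Res \<phi> S J"
  proof
    show "Res \<phi> S JN \<subseteq> Res \<phi> S J"
    proof
      fix f assume "f \<in> Res \<phi> S JN"
      then obtain g where g: "g \<in> JN" "f = restrict (\<phi> g) S" unfolding Res_def by auto
      then obtain j where j: "j \<in> J" "\<forall>x\<in>S. \<phi> g x = \<phi> j x" unfolding JN_def by auto
      have "f = restrict (\<phi> j) S" using g j by (auto simp: restrict_def)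
      thus "f \<in> Res \<phi> S J" using j unfolding Res_def by auto
    qed
    show "Res \<phi> S J \<subseteq> Res \<phi> S JN"
      unfolding Res_def JN_def using JM by blast
  qed
  have "subgroup_index G M N = subgroup_index G M JN * subgroup_index G JN N"
    using idx_mult[OF Nsub JNsub M NJN JNM] .
  moreover have "subgroup_index G M N = card (Res \<phi> S M)"
    unfolding N_def using idx_Res[OF M S] .
  moreover have "subgroup_index G JN N = card (Res \<phi> S J)"
    using idx_Res[OF JNsub S] JNN ResJN by simp
  ultimately show ?thesis by simp
qed

lemma Res_conj:
  assumes h: "h \<in> carrier G" and S: "S \<subseteq> E" and M: "M \<subseteq> carrier G"
  shows "card (Res \<phi> (\<phi> h ` S) ((\<lambda>m. h \<otimes> m \<otimes> inv h) ` M)) = card (Res \<phi> S M)"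
proof -
  interpret group G by (rule grp)
  have "Res \<phi> (\<phi> h ` S) ((\<lambda>m. h \<otimes> m \<otimes> inv h) ` M) = (\<lambda>m. restrict (\<phi> (h \<otimes> m \<otimes> inv h)) (\<phi> h ` S)) ` M"
    unfolding Res_def by (simp add: image_image)
  moreover have "card ((\<lambda>m. restrict (\<phi> (h \<otimes> m \<otimes> inv h)) (\<phi> h ` S)) ` M) = card ((\<lambda>m. restrict (\<phi> m) S) ` M)"
  proof (rule card_images_eq)
    fix u v assume u: "u \<in> M" and v: "v \<in> M"
    have key: "\<phi> (h \<otimes> m \<otimes> inv h) (\<phi> h x) = \<phi> h (\<phi> m x)" if m: "m \<in> carrier G" and x: "x \<in> S" for m x
    proof -
      have xE: "x \<in> E" using x S by auto
      have "\<phi> (h \<otimes> m \<otimes> inv h) (\<phi> h x) = \<phi> (h \<otimes> m) (\<phi> (inv h) (\<phi> h x))"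
        using act_mult h m xE act_closed by simp
      also have "\<dots> = \<phi> (h \<otimes> m) x" using act_inv1 h xE by simp
      also have "\<dots> = \<phi> h (\<phi> m x)" using act_mult h m xE by simp
      finally show ?thesis .
    qed
    have injh: "inj_on (\<phi> h) E" using inj_prop h by blast
    have uc: "u \<in> carrier G" and vc: "v \<in> carrier G" using u v M by auto
    show "(restrict (\<phi> (h \<otimes> u \<otimes> inv h)) (\<phi> h ` S) = restrict (\<phi> (h \<otimes> v \<otimes> inv h)) (\<phi> h ` S))
        \<longleftrightarrow> (restrict (\<phi> u) S = restrict (\<phi> v) S)"
    proof
      assume eq: "restrict (\<phi> (h \<otimes> u \<otimes> inv h)) (\<phi> h ` S) = restrict (\<phi> (h \<otimes> v \<otimes> inv h)) (\<phi> h ` S)"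
      have "\<phi> u x = \<phi> v x" if x: "x \<in> S" for x
      proof -
        have "\<phi> (h \<otimes> u \<otimes> inv h) (\<phi> h x) = \<phi> (h \<otimes> v \<otimes> inv h) (\<phi> h x)"
          using eq x by (metis image_eqI restrict_apply)
        hence "\<phi> h (\<phi> u x) = \<phi> h (\<phi> v x)" using key uc vc x by simp
        moreover have "\<phi> u x \<in> E" "\<phi> v x \<in> E" using act_closed uc vc x S by auto
        ultimately show ?thesis using injh by (simp add: inj_on_eq_iff)
      qed
      thus "restrict (\<phi> u) S = restrict (\<phi> v) S" by (auto simp: restrict_def)
    next
      assume eq: "restrict (\<phi> u) S = restrict (\<phi> v) S"
      have "\<phi> (h \<otimes> u \<otimes> inv h) y = \<phi> (h \<otimes> v \<otimes> inv h) y" if y: "y \<in> \<phi> h ` S" for y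
      proof -
        obtain x where x: "x \<in> S" "y = \<phi> h x" using y by auto
        have "\<phi> u x = \<phi> v x" using eq x by (metis restrict_apply)
        thus ?thesis using key uc vc x by simp
      qed
      thus "restrict (\<phi> (h \<otimes> u \<otimes> inv h)) (\<phi> h ` S) = restrict (\<phi> (h \<otimes> v \<otimes> inv h)) (\<phi> h ` S)"
        by (auto simp: restrict_def)
    qed
  qed
  ultimately show ?thesis unfolding Res_def by simp
qed

end


inductive good :: "('v \<Rightarrow> 'v \<Rightarrow> bool) \<Rightarrow> 'v set \<Rightarrow> 'v \<Rightarrow> 'v set \<Rightarrow> bool"
  for E V a where
  base: "good E V a {a}"
| step: "good E V a A \<Longrightarrow> c \<in> A \<Longrightarrow> w \<in> neighbours E V c \<Longrightarrow> good E V a (insert w A)"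

locale cag = group_action G V \<phi> for G :: "('g,'b) monoid_scheme" (structure) and V :: "'v set" and \<phi> +
  fixes E :: "'v \<Rightarrow> 'v \<Rightarrow> bool"
  assumes Ein: "E x y \<Longrightarrow> x \<in> V \<and> y \<in> V"
    and Esym: "E x y \<Longrightarrow> E y x"
    and Eaut: "g \<in> carrier G \<Longrightarrow> x \<in> V \<Longrightarrow> y \<in> V \<Longrightarrow> E (\<phi> g x) (\<phi> g y) \<longleftrightarrow> E x y"
    and finN: "x \<in> V \<Longrightarrow> finite (neighbours E V x)"
    and conn: "x \<in> V \<Longrightarrow> y \<in> V \<Longrightarrow> E\<^sup>*\<^sup>* x y"
    and trans: "x \<in> V \<Longrightarrow> y \<in> V \<Longrightarrow> \<exists>g\<in>carrier G. \<phi> g x = y"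
begin

abbreviation nb where "nb x \<equiv> neighbours E V x"

definition Mst where "Mst w c = stabilizer G \<phi> w \<inter> stabilizer G \<phi> c"

definition FF where "FF A = Fix G \<phi> (A \<union> \<Union>(nb ` A))"

lemma nb_sub: "nb x \<subseteq> V" unfolding neighbours_def by auto

lemma nb_img:
  assumes g: "g \<in> carrier G" and x: "x \<in> V"
  shows "\<phi> g ` nb x = nb (\<phi> g x)"
proof
  show "\<phi> g ` nb x \<subseteq> nb (\<phi> g x)"
  proof
    fix y assume "y \<in> \<phi> g ` nb x"
    then obtain z where z: "z \<in> nb x" "y = \<phi> g z" by auto
    have "z \<in> V" "E x z" using z unfolding neighbours_def by auto
    thus "y \<in> nb (\<phi> g x)" using z Eaut g x act_closed unfolding neighbours_def by auto
  qed
  show "nb (\<phi> g x) \<subseteq> \<phi> g ` nb x"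
  proof
    fix y assume y: "y \<in> nb (\<phi> g x)"
    have yV: "y \<in> V" and e: "E (\<phi> g x) y" using y unfolding neighbours_def by auto
    define z where "z = \<phi> (inv g) y"
    have zV: "z \<in> V" unfolding z_def by (rule act_closed[OF group.inv_closed[OF grp g] yV])
    have yz: "\<phi> g z = y" unfolding z_def using act_inv2 g yV by auto
    have "E x z" using e Eaut[OF g x zV] yz by simp
    thus "y \<in> \<phi> g ` nb x" using zV yz unfolding neighbours_def by auto
  qed
qed

lemma nb_stab:
  assumes g: "g \<in> stabilizer G \<phi> x" and x: "x \<in> V" and y: "y \<in> nb x"
  shows "\<phi> g y \<in> nb x"
proof -
  have gc: "g \<in> carrier G" and gx: "\<phi> g x = x" using g unfolding stabilizer_def by auto
  have "\<phi> g y \<in> \<phi> g ` nb x" using y by (rule imageI)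
  thus ?thesis using nb_img[OF gc x] gx by simp
qed

lemma Mst_subgroup: "w \<in> V \<Longrightarrow> c \<in> V \<Longrightarrow> subgroup (Mst w c) G"
  unfolding Mst_def using group.subgroups_Inter_pair[OF grp] stabilizer_subgroup by blast

lemma good_props: "good E V a A \<Longrightarrow> a \<in> V \<Longrightarrow> A \<subseteq> V \<and> finite A \<and> a \<in> A"
  by (induction rule: good.induct) (auto simp: neighbours_def)

lemma FF_sub: "A \<subseteq> V \<Longrightarrow> A \<union> \<Union>(nb ` A) \<subseteq> V" using nb_sub by auto

lemma FF_subgroup: "A \<subseteq> V \<Longrightarrow> subgroup (FF A) G"
  unfolding FF_def using Fix_subgroup FF_sub by blast

lemma FF_anti: "B \<subseteq> A \<Longrightarrow> FF A \<subseteq> FF B"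
  unfolding FF_def Fix_def by auto

lemma idx_self: assumes "subgroup H G" shows "subgroup_index G H H = 1"
proof -
  interpret group G by (rule grp)
  have "{H #> u | u. u \<in> H} = {H}"
    using coset_join2[OF _ assms] subgroup.subset[OF assms] subgroup.one_closed[OF assms] by blast
  thus ?thesis unfolding subgroup_index_def by simp
qed

lemma conj_act:
  assumes h: "h \<in> carrier G" and m: "m \<in> carrier G" and x: "x \<in> V"
  shows "\<phi> (h \<otimes> m \<otimes> inv h) (\<phi> h x) = \<phi> h (\<phi> m x)"
proof -
  interpret group G by (rule grp)
  have "\<phi> (h \<otimes> m \<otimes> inv h) (\<phi> h x) = \<phi> (h \<otimes> m) (\<phi> (inv h) (\<phi> h x))"
    using act_mult h m x act_closed by simp
  also have "\<dots> = \<phi> (h \<otimes> m) x" using act_inv1 h x by simp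
  also have "\<dots> = \<phi> h (\<phi> m x)" using act_mult h m x by simp
  finally show ?thesis .
qed

lemma Res_transfer:
  assumes a: "a \<in> V" and w: "w \<in> V" and c: "c \<in> nb w"
  shows "\<exists>c0\<in>nb a. card (Res \<phi> (nb w) (Mst w c)) = card (Res \<phi> (nb a) (Mst a c0))"
proof -
  interpret group G by (rule grp)
  obtain h where h: "h \<in> carrier G" "\<phi> h a = w" using trans[OF a w] by blast
  have nbw: "nb w = \<phi> h ` nb a" using nb_img[OF h(1) a] h(2) by simp
  obtain c0 where c0: "c0 \<in> nb a" "c = \<phi> h c0" using c nbw by auto
  have c0V: "c0 \<in> V" using c0 nb_sub by auto
  have cV: "c \<in> V" using c nb_sub by auto
  have "Mst w c = (\<lambda>m. h \<otimes> m \<otimes> inv h) ` Mst a c0"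
  proof
    show "(\<lambda>m. h \<otimes> m \<otimes> inv h) ` Mst a c0 \<subseteq> Mst w c"
    proof
      fix g assume "g \<in> (\<lambda>m. h \<otimes> m \<otimes> inv h) ` Mst a c0"
      then obtain m where m: "m \<in> Mst a c0" "g = h \<otimes> m \<otimes> inv h" by auto
      have mc: "m \<in> carrier G" "\<phi> m a = a" "\<phi> m c0 = c0" using m unfolding Mst_def stabilizer_def by auto
      have "\<phi> g w = w" using conj_act[OF h(1) mc(1) a] h m(2) mc by simp
      moreover have "\<phi> g c = c" using conj_act[OF h(1) mc(1) c0V] c0 m(2) mc by simp
      moreover have "g \<in> carrier G" using m(2) h mc by simp
      ultimately show "g \<in> Mst w c" unfolding Mst_def stabilizer_def by auto
    qed
    show "Mst w c \<subseteq> (\<lambda>m. h \<otimes> m \<otimes> inv h) ` Mst a c0"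
    proof
      fix g assume g: "g \<in> Mst w c"
      have gc: "g \<in> carrier G" "\<phi> g w = w" "\<phi> g c = c" using g unfolding Mst_def stabilizer_def by auto
      define m where "m = inv h \<otimes> g \<otimes> h"
      have mc: "m \<in> carrier G" unfolding m_def using gc h by simp
      have hh: "h \<otimes> (inv h \<otimes> g) = g" using gc h by (metis m_assoc inv_closed r_inv l_one)
      have gm: "g = h \<otimes> m \<otimes> inv h" unfolding m_def using gc h hh by (simp add: m_assoc)
      have "\<phi> m a = a"
      proof -
        have "\<phi> h (\<phi> m a) = \<phi> h a" using conj_act[OF h(1) mc a] gm gc h by simp
        moreover have "\<phi> m a \<in> V" using act_closed mc a by auto
        ultimately show ?thesis using inj_prop[OF h(1)] a by (simp add: inj_on_eq_iff)
      qed
      moreover have "\<phi> m c0 = c0"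
      proof -
        have "\<phi> h (\<phi> m c0) = \<phi> h c0" using conj_act[OF h(1) mc c0V] gm gc c0 by simp
        moreover have "\<phi> m c0 \<in> V" using act_closed mc c0V by auto
        ultimately show ?thesis using inj_prop[OF h(1)] c0V by (simp add: inj_on_eq_iff)
      qed
      ultimately have "m \<in> Mst a c0" using mc unfolding Mst_def stabilizer_def by auto
      thus "g \<in> (\<lambda>m. h \<otimes> m \<otimes> inv h) ` Mst a c0" using gm by blast
    qed
  qed
  moreover have "Mst a c0 \<subseteq> carrier G" unfolding Mst_def stabilizer_def by auto
  ultimately have "card (Res \<phi> (nb w) (Mst w c)) = card (Res \<phi> (nb a) (Mst a c0))"
    using Res_conj[OF h(1) nb_sub] nbw by simp
  thus ?thesis using c0 by blast
qed

lemma good_idx: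
  assumes a: "a \<in> V" and p: "Factorial_Ring.prime (p::nat)"
    and hyp: "\<And>w c. w \<in> V \<Longrightarrow> c \<in> nb w \<Longrightarrow> \<not> p dvd card (Res \<phi> (nb w) (Mst w c))"
    and A: "good E V a A"
  shows "\<not> p dvd subgroup_index G (FF {a}) (FF A)"
  using A
proof (induction rule: good.induct)
  case base
  have "subgroup (FF {a}) G" using FF_subgroup a by auto
  thus ?case using idx_self p prime_gt_1_nat by fastforce
next
  case (step A c w)
  note sh = step.hyps
  have IH: "\<not> p dvd subgroup_index G (FF {a}) (FF A)" using step.IH .
  have AV: "A \<subseteq> V" "a \<in> A" using good_props[OF sh(1) a] by auto
  have cV: "c \<in> V" using AV sh(2) by auto
  have wV: "w \<in> V" using sh(3) nb_sub by auto
  have ecw: "E c w" using sh(3) unfolding neighbours_def by auto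
  have cnw: "c \<in> nb w" using Esym[OF ecw] cV unfolding neighbours_def by auto
  have FFins: "FF (insert w A) = FF A \<inter> Fix G \<phi> (nb w)"
  proof -
    have "w \<in> \<Union>(nb ` A)" using sh(2,3) by auto
    hence "insert w A \<union> \<Union>(nb ` insert w A) = (A \<union> \<Union>(nb ` A)) \<union> nb w" by auto
    thus ?thesis unfolding FF_def Fix_def by auto
  qed
  have s1: "subgroup (FF {a}) G" using FF_subgroup a by auto
  have s2: "subgroup (FF A) G" using FF_subgroup AV by auto
  have s3: "subgroup (FF (insert w A)) G" using FF_subgroup AV wV by auto
  have i1: "FF (insert w A) \<subseteq> FF A" by (rule FF_anti) auto
  have i2: "FF A \<subseteq> FF {a}" by (rule FF_anti) (use AV in auto)
  have "subgroup_index G (FF {a}) (FF (insert w A)) =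
        subgroup_index G (FF {a}) (FF A) * subgroup_index G (FF A) (FF (insert w A))"
    using group.idx_mult[OF grp s3 s2 s1 i1 i2] .
  moreover have "subgroup_index G (FF A) (FF (insert w A)) = card (Res \<phi> (nb w) (FF A))"
    using idx_Res[OF s2 nb_sub] FFins by simp
  moreover have "card (Res \<phi> (nb w) (FF A)) dvd card (Res \<phi> (nb w) (Mst w c))"
  proof (rule Res_dvd[OF s2 Mst_subgroup[OF wV cV] _ nb_sub])
    show "FF A \<subseteq> Mst w c"
    proof
      fix g assume "g \<in> FF A"
      moreover have "w \<in> A \<union> \<Union>(nb ` A)" "c \<in> A \<union> \<Union>(nb ` A)" using sh(2,3) by auto
      ultimately show "g \<in> Mst w c" unfolding FF_def Fix_def Mst_def stabilizer_def by auto
    qed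
    show "\<And>g x. g \<in> Mst w c \<Longrightarrow> x \<in> nb w \<Longrightarrow> \<phi> g x \<in> nb w"
      using nb_stab wV unfolding Mst_def by blast
  qed
  ultimately have eq: "subgroup_index G (FF {a}) (FF (insert w A)) =
        subgroup_index G (FF {a}) (FF A) * card (Res \<phi> (nb w) (FF A))"
    and dv: "card (Res \<phi> (nb w) (FF A)) dvd card (Res \<phi> (nb w) (Mst w c))" by simp_all
  have "\<not> p dvd card (Res \<phi> (nb w) (FF A))"
  proof
    assume "p dvd card (Res \<phi> (nb w) (FF A))"
    hence "p dvd card (Res \<phi> (nb w) (Mst w c))" using dv by (rule dvd_trans)
    thus False using hyp[OF wV cnw] by simp
  qed
  thus ?case unfolding eq using IH prime_dvd_mult_iff[OF p] by blast
qed

lemma good_reach: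
  assumes g: "good E V a A" and y: "E\<^sup>*\<^sup>* a y"
  shows "\<exists>A'. good E V a A' \<and> A \<subseteq> A' \<and> y \<in> A'"
  using y
proof (induction rule: rtranclp_induct)
  case base
  have "a \<in> A" using g by (induction rule: good.induct) auto
  thus ?case using g by blast
next
  case (step y z)
  then obtain A' where A': "good E V a A'" "A \<subseteq> A'" "y \<in> A'" by blast
  have "z \<in> nb y" using step(2) Ein unfolding neighbours_def by auto
  hence "good E V a (insert z A')" using good.step[OF A'(1) A'(3)] by blast
  thus ?case using A' by blast
qed

lemma good_cover:
  assumes a: "a \<in> V" and B: "finite B" "B \<subseteq> V"
  shows "\<exists>A. good E V a A \<and> B \<subseteq> A"
  using B
proof (induction rule: finite_induct)
  case empty
  show ?case using good.base[of E V a] by blast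
next
  case (insert b B)
  then obtain A where A: "good E V a A" "B \<subseteq> A" by auto
  have "E\<^sup>*\<^sup>* a b" using conn a insert by auto
  then obtain A' where "good E V a A'" "A \<subseteq> A'" "b \<in> A'" using good_reach[OF A(1)] by blast
  thus ?case using A by blast
qed

lemma la_card:
  assumes a: "a \<in> V" and bj: "bij_betw bj (nb a) {1..d}" and i: "i \<in> {1..d}"
  shows "card {\<sigma> \<in> local_action G V E \<phi> a d bj. \<sigma> i = i} = card (Res \<phi> (nb a) (Mst a (inv_into (nb a) bj i)))"
proof -
  define sg where "sg g = (\<lambda>i. if i \<in> {1..d} then bj (\<phi> g (inv_into (nb a) bj i)) else i)" for g
  define c0 where "c0 = inv_into (nb a) bj i"
  have c0: "c0 \<in> nb a" "bj c0 = i" unfolding c0_def using bj i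
    by (auto simp: bij_betw_def inv_into_into f_inv_into_f)
  have injbj: "inj_on bj (nb a)" using bj bij_betw_def by blast
  have ivx: "inv_into (nb a) bj (bj x) = x" if "x \<in> nb a" for x using injbj that by simp
  have LA: "local_action G V E \<phi> a d bj = sg ` stabilizer G \<phi> a"
    unfolding local_action_def sg_def by auto
  have fixi: "sg g i = i \<longleftrightarrow> g \<in> stabilizer G \<phi> c0" if g: "g \<in> stabilizer G \<phi> a" for g
  proof -
    have "\<phi> g c0 \<in> nb a" using nb_stab g a c0 by auto
    hence "bj (\<phi> g c0) = bj c0 \<longleftrightarrow> \<phi> g c0 = c0" using inj_on_eq_iff[OF injbj _ c0(1)] by blast
    thus ?thesis using g i c0 unfolding sg_def c0_def stabilizer_def by auto
  qed
  have "{\<sigma> \<in> local_action G V E \<phi> a d bj. \<sigma> i = i} = sg ` Mst a c0"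
    unfolding LA Mst_def using fixi by auto
  moreover have "card (sg ` Mst a c0) = card ((\<lambda>g. restrict (\<phi> g) (nb a)) ` Mst a c0)"
  proof (rule card_images_eq)
    fix u v assume u: "u \<in> Mst a c0" and v: "v \<in> Mst a c0"
    have us: "u \<in> stabilizer G \<phi> a" and vs: "v \<in> stabilizer G \<phi> a" using u v unfolding Mst_def by auto
    show "sg u = sg v \<longleftrightarrow> restrict (\<phi> u) (nb a) = restrict (\<phi> v) (nb a)"
    proof
      assume eq: "sg u = sg v"
      have "\<phi> u x = \<phi> v x" if x: "x \<in> nb a" for x
      proof -
        have bx: "bj x \<in> {1..d}" using bj x bij_betwE by blast
        have "sg u (bj x) = sg v (bj x)" using eq by simp
        hence "bj (\<phi> u x) = bj (\<phi> v x)" using bx ivx[OF x] unfolding sg_def by simp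
        moreover have "\<phi> u x \<in> nb a" "\<phi> v x \<in> nb a" using nb_stab us vs a x by auto
        ultimately show ?thesis using injbj by (simp add: inj_on_eq_iff)
      qed
      thus "restrict (\<phi> u) (nb a) = restrict (\<phi> v) (nb a)" by (auto simp: restrict_def)
    next
      assume eq: "restrict (\<phi> u) (nb a) = restrict (\<phi> v) (nb a)"
      have "\<phi> u x = \<phi> v x" if "x \<in> nb a" for x using eq that by (metis restrict_apply)
      moreover have "inv_into (nb a) bj j \<in> nb a" if "j \<in> {1..d}" for j
        using bj that by (metis bij_betw_def inv_into_into)
      ultimately show "sg u = sg v" unfolding sg_def by auto
    qed
  qed
  ultimately show ?thesis unfolding Res_def c0_def by simp
qed

end


lemma tg_ltrans:
  assumes T: "topological_group G T" and g: "g \<in> carrier G"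
  shows "continuous_map T T (\<lambda>x. g \<otimes>\<^bsub>G\<^esub> x)"
proof -
  have ts: "topspace T = carrier G" and m: "continuous_map (prod_topology T T) T (\<lambda>(x, y). x \<otimes>\<^bsub>G\<^esub> y)"
    using T unfolding topological_group_def by auto
  have c: "continuous_map T (prod_topology T T) (\<lambda>x. (g, x))"
    by (rule continuous_map_pairedI) (simp_all add: ts g)
  show ?thesis using continuous_map_compose[OF c m] by (simp add: o_def)
qed

lemma open_subgroup_closed:
  fixes G :: "('g, 'b) monoid_scheme" (structure)
  assumes T: "topological_group G T" and U: "subgroup U G" and o: "openin T U"
  shows "closedin T U"
proof -
  interpret group G using T unfolding topological_group_def by auto
  have ts: "topspace T = carrier G" using T unfolding topological_group_def by auto
  have Uc: "U \<subseteq> carrier G" using U subgroup.subset by blast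
  have eq: "carrier G - U = \<Union> ((\<lambda>g. {x \<in> topspace T. inv g \<otimes> x \<in> U}) ` (carrier G - U))"
  proof
    show "carrier G - U \<subseteq> \<Union> ((\<lambda>g. {x \<in> topspace T. inv g \<otimes> x \<in> U}) ` (carrier G - U))"
    proof
      fix x assume x: "x \<in> carrier G - U"
      have "inv x \<otimes> x \<in> U" using x subgroup.one_closed[OF U] by simp
      moreover have "x \<in> topspace T" using x ts by auto
      ultimately show "x \<in> \<Union> ((\<lambda>g. {x \<in> topspace T. inv g \<otimes> x \<in> U}) ` (carrier G - U))" using x by blast
    qed
    show "\<Union> ((\<lambda>g. {x \<in> topspace T. inv g \<otimes> x \<in> U}) ` (carrier G - U)) \<subseteq> carrier G - U"
    proof
      fix x assume "x \<in> \<Union> ((\<lambda>g. {x \<in> topspace T. inv g \<otimes> x \<in> U}) ` (carrier G - U))"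
      then obtain g where g: "g \<in> carrier G" "g \<notin> U" "x \<in> carrier G" "inv g \<otimes> x \<in> U" using ts by auto
      have "x \<notin> U"
      proof
        assume xU: "x \<in> U"
        have "inv g = (inv g \<otimes> x) \<otimes> inv x" using g by (simp add: m_assoc)
        hence "inv g \<in> U" using g xU subgroup.m_closed[OF U] subgroup.m_inv_closed[OF U] by metis
        hence "inv (inv g) \<in> U" using subgroup.m_inv_closed[OF U] by blast
        thus False using g by simp
      qed
      thus "x \<in> carrier G - U" using g by auto
    qed
  qed
  have "openin T (carrier G - U)"
    apply (subst eq)
    apply (rule openin_Union)
    using openin_continuous_map_preimage[OF tg_ltrans[OF T] o] by auto
  thus ?thesis unfolding closedin_def using ts Uc by simp
qed

lemma (in group) rcos_eq_iff:
  assumes H: "subgroup H G" and x: "x \<in> carrier G" and y: "y \<in> carrier G"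
  shows "H #> x = H #> y \<longleftrightarrow> x \<otimes> inv y \<in> H"
proof
  assume "H #> x = H #> y"
  hence "x \<in> H #> y" using rcos_self[OF x H] by simp
  thus "x \<otimes> inv y \<in> H" using subgroup.rcos_module[OF H is_group y x] by simp
next
  assume "x \<otimes> inv y \<in> H"
  hence "x \<in> H #> y" using subgroup.rcos_module[OF H is_group y x] by simp
  thus "H #> x = H #> y" using repr_independence[OF _ y H] by simp
qed

lemma qt_istop:
  fixes G :: "('g, 'b) monoid_scheme" (structure)
  assumes K: "normal K G"
  shows "istopology (\<lambda>\<U>. \<U> \<subseteq> rcosets\<^bsub>G\<^esub> K \<and> openin T (\<Union>\<U>))"
proof -
  interpret normal K G by (rule K)
  have disj: "S1 = S2" if "S1 \<in> rcosets K" "S2 \<in> rcosets K" "x \<in> S1" "x \<in> S2" for S1 S2 x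
    using rcos_disjoint[OF subgroup_axioms] that unfolding pairwise_def disjnt_def by blast
  show ?thesis unfolding istopology_def
  proof (rule conjI; intro allI impI)
    fix S1 S2 assume a1: "S1 \<subseteq> rcosets K \<and> openin T (\<Union> S1)" and a2: "S2 \<subseteq> rcosets K \<and> openin T (\<Union> S2)"
    have "\<Union>(S1 \<inter> S2) = \<Union>S1 \<inter> \<Union>S2"
    proof
      show "\<Union> (S1 \<inter> S2) \<subseteq> \<Union> S1 \<inter> \<Union> S2" by auto
      show "\<Union> S1 \<inter> \<Union> S2 \<subseteq> \<Union> (S1 \<inter> S2)"
      proof
        fix x assume "x \<in> \<Union> S1 \<inter> \<Union> S2"
        then obtain A B where "A \<in> S1" "B \<in> S2" "x \<in> A" "x \<in> B" by auto
        moreover hence "A = B" using disj a1 a2 by blast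
        ultimately show "x \<in> \<Union> (S1 \<inter> S2)" by auto
      qed
    qed
    thus "S1 \<inter> S2 \<subseteq> rcosets K \<and> openin T (\<Union> (S1 \<inter> S2))" using a1 a2 by auto
  next
    fix KK assume a: "\<forall>S\<in>KK. S \<subseteq> rcosets K \<and> openin T (\<Union> S)"
    have "\<Union>(\<Union>KK) = \<Union>(Union ` KK)" by auto
    moreover have "openin T (\<Union>(Union ` KK))" using a by auto
    ultimately show "\<Union> KK \<subseteq> rcosets K \<and> openin T (\<Union> (\<Union> KK))" using a by auto
  qed
qed

lemma qt_open:
  assumes K: "normal K G"
  shows "openin (quotient_group_topology G T K) \<U> \<longleftrightarrow> \<U> \<subseteq> rcosets\<^bsub>G\<^esub> K \<and> openin T (\<Union>\<U>)"
  unfolding quotient_group_topology_def using topology_inverse'[OF qt_istop[OF K]] by simp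

lemma qt_cont:
  fixes G :: "('g, 'b) monoid_scheme" (structure)
  assumes T: "topological_group G T" and K: "normal K G"
  shows "continuous_map T (quotient_group_topology G T K) (\<lambda>x. K #>\<^bsub>G\<^esub> x)"
proof -
  interpret normal K G by (rule K)
  have ts: "topspace T = carrier G" using T unfolding topological_group_def by auto
  have "openin (quotient_group_topology G T K) (rcosets K)"
    unfolding qt_open[OF K] using rcosets_part_G[OF subgroup_axioms] ts openin_topspace[of T] by simp
  hence rt: "rcosets K \<subseteq> topspace (quotient_group_topology G T K)" by (rule openin_subset)
  show ?thesis unfolding continuous_map
  proof (intro conjI allI impI)
    show "(\<lambda>x. K #> x) ` topspace T \<subseteq> topspace (quotient_group_topology G T K)"
      using rt ts rcosetsI subset by blast
    fix \<U> assume "openin (quotient_group_topology G T K) \<U>"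
    hence U: "\<U> \<subseteq> rcosets K" "openin T (\<Union>\<U>)" using qt_open[OF K] by auto
    have "{x \<in> topspace T. K #> x \<in> \<U>} = \<Union>\<U>"
    proof
      show "{x \<in> topspace T. K #> x \<in> \<U>} \<subseteq> \<Union> \<U>"
        using rcos_self[OF _ subgroup_axioms] ts by auto
      show "\<Union> \<U> \<subseteq> {x \<in> topspace T. K #> x \<in> \<U>}"
      proof
        fix x assume "x \<in> \<Union>\<U>"
        then obtain S where S: "S \<in> \<U>" "x \<in> S" by auto
        then obtain z where z: "z \<in> carrier G" "S = K #> z" using U unfolding RCOSETS_def by auto
        have xc: "x \<in> carrier G" using S z r_coset_subset_G subset by blast
        have "K #> z = K #> x" using repr_independence[of x K z] S z subgroup_axioms by simp
        thus "x \<in> {x \<in> topspace T. K #> x \<in> \<U>}" using S z xc ts by auto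
      qed
    qed
    thus "openin T {x \<in> topspace T. K #> x \<in> \<U>}" using U by simp
  qed
qed



context cag
begin

lemma K_eq: "action_kernel G V \<phi> = Fix G \<phi> V"
  unfolding action_kernel_def Fix_def by simp

lemma K_normal: "action_kernel G V \<phi> \<lhd> G"
proof -
  interpret group G by (rule grp)
  have s: "subgroup (Fix G \<phi> V) G" using Fix_subgroup by simp
  have "x \<otimes> h \<otimes> inv x \<in> Fix G \<phi> V" if x: "x \<in> carrier G" and h: "h \<in> Fix G \<phi> V" for x h
  proof -
    have hc: "h \<in> carrier G" using h unfolding Fix_def by auto
    have "\<phi> (x \<otimes> h \<otimes> inv x) b = b" if b: "b \<in> V" for b
    proof -
      have ib: "\<phi> (inv x) b \<in> V" using act_closed x b by simp
      have "\<phi> (x \<otimes> h \<otimes> inv x) b = \<phi> (x \<otimes> h) (\<phi> (inv x) b)" using act_mult x hc b by simp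
      also have "\<dots> = \<phi> x (\<phi> h (\<phi> (inv x) b))" using act_mult x hc ib by simp
      also have "\<phi> h (\<phi> (inv x) b) = \<phi> (inv x) b" using h ib unfolding Fix_def by auto
      finally show ?thesis using act_inv2 x b by simp
    qed
    thus ?thesis unfolding Fix_def using x hc by simp
  qed
  thus ?thesis unfolding K_eq using normal_inv_iff s by blast
qed

lemma Fix_Inter: "S \<noteq> {} \<Longrightarrow> Fix G \<phi> S = \<Inter>(stabilizer G \<phi> ` S)"
  unfolding Fix_def stabilizer_def by auto

lemma core:
  assumes T: "topological_group G T"
    and stab: "\<And>b. b \<in> V \<Longrightarrow> compactin T (stabilizer G \<phi> b) \<and> openin T (stabilizer G \<phi> b)"
    and a: "a \<in> V" and p: "Factorial_Ring.prime (p::nat)"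
    and hyp: "\<And>w c. w \<in> V \<Longrightarrow> c \<in> nb w \<Longrightarrow> \<not> p dvd card (Res \<phi> (nb w) (Mst w c))"
  shows "p \<notin> local_prime_content (G Mod (action_kernel G V \<phi>))
              (quotient_group_topology G T (action_kernel G V \<phi>))"
proof
  assume pl: "p \<in> local_prime_content (G Mod (action_kernel G V \<phi>))
              (quotient_group_topology G T (action_kernel G V \<phi>))"
  interpret group G by (rule grp)
  define K where "K = action_kernel G V \<phi>"
  have nK: "K \<lhd> G" unfolding K_def by (rule K_normal)
  interpret nKi: normal K G by (rule nK)
  have ts: "topspace T = carrier G" using T unfolding topological_group_def by auto
  have stabcl: "closedin T (stabilizer G \<phi> b)" if "b \<in> V" for b
    using open_subgroup_closed[OF T stabilizer_subgroup[OF that]] stab[OF that] by blast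
  define B0 where "B0 = {a} \<union> \<Union>(nb ` {a})"
  have B0: "finite B0" "B0 \<subseteq> V" "B0 \<noteq> {}" "a \<in> B0" unfolding B0_def using finN[OF a] nb_sub a by auto
  define H0 where "H0 = FF {a}"
  have H0eq: "H0 = \<Inter>(stabilizer G \<phi> ` B0)" unfolding H0_def FF_def B0_def[symmetric] using Fix_Inter B0 by simp
  have H0open: "openin T H0" unfolding H0eq using B0 stab by (intro openin_Inter) auto
  have H0closed: "closedin T H0" unfolding H0eq using B0 stabcl by (intro closedin_Inter) auto
  have H0cpt: "compactin T H0"
    using closed_compactin[OF conjunct1[OF stab[OF a]] _ H0closed] B0 unfolding H0eq by auto
  have H0sub: "subgroup H0 G" unfolding H0_def using FF_subgroup a by auto
  have KH0: "K \<subseteq> H0" unfolding K_def K_eq H0_def FF_def Fix_def using B0 unfolding B0_def by auto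
  have Ksub: "subgroup K G" using nKi.subgroup_axioms .
  define Q where "Q = G Mod K"
  define TQ where "TQ = quotient_group_topology G T K"
  have Qgrp: "group Q" unfolding Q_def using nKi.factorgroup_is_group .
  have gh: "group_hom G Q (\<lambda>x. K #> x)"
    unfolding group_hom_def group_hom_axioms_def Q_def
    using grp nKi.factorgroup_is_group nKi.r_coset_hom_Mod by simp
  have carQ: "carrier Q = rcosets K" and oneQ: "one Q = K" unfolding Q_def FactGroup_def by simp_all
  define U where "U = (\<lambda>x. K #> x) ` H0"
  have UH0: "\<Union>U = H0"
  proof
    show "\<Union>U \<subseteq> H0"
    proof
      fix x assume "x \<in> \<Union>U"
      then obtain h where h: "h \<in> H0" "x \<in> K #> h" unfolding U_def by auto
      then obtain k where k: "k \<in> K" "x = k \<otimes> h" unfolding r_coset_def by auto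
      thus "x \<in> H0" using subgroup.m_closed[OF H0sub] KH0 h by auto
    qed
    show "H0 \<subseteq> \<Union>U"
    proof
      fix h assume h: "h \<in> H0"
      have "h \<in> K #> h" using rcos_self[OF _ Ksub] h subgroup.subset[OF H0sub] by auto
      thus "h \<in> \<Union>U" using h unfolding U_def by auto
    qed
  qed
  have Ucos: "compact_open_subgroup Q TQ U"
    unfolding compact_open_subgroup_def
  proof (intro conjI)
    show "subgroup U Q" unfolding U_def using group_hom.subgroup_img_is_subgroup[OF gh H0sub] .
    show "compactin TQ U" unfolding U_def TQ_def using image_compactin[OF H0cpt qt_cont[OF T nK]] .
    have "U \<subseteq> rcosets K" unfolding U_def using rcosetsI subgroup.subset[OF H0sub] subgroup.subset[OF Ksub] by blast
    thus "openin TQ U" unfolding TQ_def qt_open[OF nK] using UH0 H0open by simp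
  qed
  obtain V' where V': "compact_open_subgroup Q TQ V'" "V' \<subseteq> U" "p dvd subgroup_index Q U V'"
    using pl Ucos unfolding local_prime_content_def K_def[symmetric] Q_def[symmetric] TQ_def[symmetric] by blast
  have V'sub: "subgroup V' Q" and V'open: "openin TQ V'" using V'(1) unfolding compact_open_subgroup_def by auto
  have V'rc: "V' \<subseteq> rcosets K" using subgroup.subset[OF V'sub] carQ by simp
  define W where "W = \<Union>V'"
  have Wopen: "openin T W" using V'open unfolding W_def TQ_def qt_open[OF nK] by simp
  have WH0: "W \<subseteq> H0" unfolding W_def using V'(2) UH0 by auto
  have Wc: "W \<subseteq> carrier G" using WH0 subgroup.subset[OF H0sub] by auto
  have memW: "x \<in> W \<longleftrightarrow> K #> x \<in> V'" if x: "x \<in> carrier G" for x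
  proof
    assume "x \<in> W"
    then obtain S where S: "S \<in> V'" "x \<in> S" unfolding W_def by auto
    then obtain z where z: "z \<in> carrier G" "S = K #> z" using V'rc unfolding RCOSETS_def by auto
    have "K #> z = K #> x" using repr_independence[of x K z] S z Ksub by simp
    thus "K #> x \<in> V'" using S z by simp
  next
    assume "K #> x \<in> V'"
    moreover have "x \<in> K #> x" using rcos_self[OF x Ksub] .
    ultimately show "x \<in> W" unfolding W_def by auto
  qed
  have KV': "K \<in> V'" using subgroup.one_closed[OF V'sub] oneQ by simp
  have KW: "K \<subseteq> W" unfolding W_def using KV' by auto
  have Wsub: "subgroup W G"
  proof (rule subgroupI)
    show "W \<subseteq> carrier G" by (rule Wc)
    show "W \<noteq> {}" using KW subgroup.one_closed[OF Ksub] by blast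
    show "inv x \<in> W" if x: "x \<in> W" for x
    proof -
      have xc: "x \<in> carrier G" using x Wc by auto
      have "K #> inv x = inv\<^bsub>Q\<^esub> (K #> x)" using group_hom.hom_inv[OF gh xc] .
      moreover have "K #> x \<in> V'" using memW xc x by simp
      ultimately have "K #> inv x \<in> V'" using subgroup.m_inv_closed[OF V'sub] by simp
      thus ?thesis using memW xc by simp
    qed
    show "x \<otimes> y \<in> W" if x: "x \<in> W" and y: "y \<in> W" for x y
    proof -
      have xc: "x \<in> carrier G" and yc: "y \<in> carrier G" using x y Wc by auto
      have "K #> (x \<otimes> y) = (K #> x) \<otimes>\<^bsub>Q\<^esub> (K #> y)" using group_hom.hom_mult[OF gh xc yc] .
      moreover have "K #> x \<in> V'" "K #> y \<in> V'" using memW xc yc x y by auto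
      ultimately have "K #> (x \<otimes> y) \<in> V'" using subgroup.m_closed[OF V'sub] by simp
      thus ?thesis using memW xc yc by simp
    qed
  qed
  have idxeq: "subgroup_index Q U V' = subgroup_index G H0 W"
  proof -
    have "{V' #>\<^bsub>Q\<^esub> u | u. u \<in> U} = (\<lambda>h. V' #>\<^bsub>Q\<^esub> (K #> h)) ` H0" unfolding U_def by auto
    moreover have "{W #> u | u. u \<in> H0} = (\<lambda>h. W #> h) ` H0" by auto
    moreover have "card ((\<lambda>h. V' #>\<^bsub>Q\<^esub> (K #> h)) ` H0) = card ((\<lambda>h. W #> h) ` H0)"
    proof (rule card_images_eq)
      fix u v assume u: "u \<in> H0" and v: "v \<in> H0"
      have uc: "u \<in> carrier G" and vc: "v \<in> carrier G" using u v subgroup.subset[OF H0sub] by auto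
      have uQ: "K #> u \<in> carrier Q" and vQ: "K #> v \<in> carrier Q" using uc vc carQ rcosetsI subgroup.subset[OF Ksub] by auto
      have "V' #>\<^bsub>Q\<^esub> (K #> u) = V' #>\<^bsub>Q\<^esub> (K #> v) \<longleftrightarrow> (K #> u) \<otimes>\<^bsub>Q\<^esub> inv\<^bsub>Q\<^esub> (K #> v) \<in> V'"
        using group.rcos_eq_iff[OF Qgrp V'sub uQ vQ] .
      also have "(K #> u) \<otimes>\<^bsub>Q\<^esub> inv\<^bsub>Q\<^esub> (K #> v) = K #> (u \<otimes> inv v)"
        using group_hom.hom_mult[OF gh uc inv_closed[OF vc]] group_hom.hom_inv[OF gh vc] by simp
      also have "K #> (u \<otimes> inv v) \<in> V' \<longleftrightarrow> u \<otimes> inv v \<in> W" using memW uc vc by simp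
      also have "\<dots> \<longleftrightarrow> W #> u = W #> v" using rcos_eq_iff[OF Wsub uc vc] by simp
      finally show "V' #>\<^bsub>Q\<^esub> (K #> u) = V' #>\<^bsub>Q\<^esub> (K #> v) \<longleftrightarrow> W #> u = W #> v" .
    qed
    ultimately show ?thesis unfolding subgroup_index_def by simp
  qed
  define D where "D = H0 - W"
  have Dcl: "closedin T D" unfolding D_def using closedin_diff[OF H0closed Wopen] .
  have Dcpt: "compactin T D" using closed_compactin[OF H0cpt _ Dcl] unfolding D_def by auto
  define Op where "Op b = topspace T - stabilizer G \<phi> b" for b
  have Oopen: "openin T (Op b)" if "b \<in> V" for b
    using stabcl[OF that] unfolding closedin_def Op_def by simp
  have Dcov: "D \<subseteq> \<Union>(Op ` V)"
  proof
    fix g assume g: "g \<in> D"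
    have gc: "g \<in> carrier G" using g subgroup.subset[OF H0sub] unfolding D_def by auto
    have "g \<notin> K" using g KW unfolding D_def by auto
    then obtain b where b: "b \<in> V" "\<phi> g b \<noteq> b" using gc unfolding K_def action_kernel_def by auto
    hence "g \<in> Op b" using gc ts unfolding Op_def stabilizer_def by auto
    thus "g \<in> \<Union>(Op ` V)" using b by auto
  qed
  obtain F where F: "finite F" "F \<subseteq> Op ` V" "D \<subseteq> \<Union>F"
    using Dcpt Dcov Oopen unfolding compactin_def by (metis (no_types, lifting) imageE)
  obtain C where C: "C \<subseteq> V" "finite C" "F = Op ` C" using finite_subset_image[OF F(1,2)] by blast
  obtain A where A: "good E V a A" "C \<subseteq> A" using good_cover[OF a C(2,1)] by blast
  have Aprops: "A \<subseteq> V" "finite A" "a \<in> A" using good_props[OF A(1) a] by auto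
  have FFW: "FF A \<subseteq> W"
  proof
    fix g assume g: "g \<in> FF A"
    have gH0: "g \<in> H0" using g FF_anti[of "{a}" A] Aprops unfolding H0_def by auto
    have "g \<notin> \<Union>F"
    proof
      assume "g \<in> \<Union>F"
      then obtain c where c: "c \<in> C" "g \<in> Op c" using C by auto
      have "\<phi> g c = c" using g c A(2) unfolding FF_def Fix_def by auto
      thus False using c g unfolding Op_def stabilizer_def FF_def Fix_def by auto
    qed
    thus "g \<in> W" using gH0 F(3) unfolding D_def by auto
  qed
  have FAsub: "subgroup (FF A) G" using FF_subgroup Aprops by auto
  have "subgroup_index G H0 (FF A) = subgroup_index G H0 W * subgroup_index G W (FF A)"
    using idx_mult[OF FAsub Wsub H0sub FFW WH0] .
  hence "p dvd subgroup_index G H0 (FF A)" using V'(3) idxeq by simp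
  thus False using good_idx[OF a p hyp A(1)] unfolding H0_def by simp
qed

end


context cag
begin

lemma part1:
  assumes T: "topological_group G T"
    and stab: "\<And>b. b \<in> V \<Longrightarrow> compactin T (stabilizer G \<phi> b) \<and> openin T (stabilizer G \<phi> b)"
    and pl: "p \<in> local_prime_content (G Mod (action_kernel G V \<phi>))
              (quotient_group_topology G T (action_kernel G V \<phi>))"
    and a: "a \<in> V" and bj: "bij_betw bj (nb a) {1..d}"
  shows "\<exists>i\<in>{1..d}. p dvd card {\<sigma> \<in> local_action G V E \<phi> a d bj. \<sigma> i = i}"
proof (rule ccontr)
  assume nh: "\<not> (\<exists>i\<in>{1..d}. p dvd card {\<sigma> \<in> local_action G V E \<phi> a d bj. \<sigma> i = i})"
  have p: "Factorial_Ring.prime p" using pl unfolding local_prime_content_def by auto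
  have hyp: "\<not> p dvd card (Res \<phi> (nb w) (Mst w c))" if w: "w \<in> V" and c: "c \<in> nb w" for w c
  proof -
    obtain c0 where c0: "c0 \<in> nb a" "card (Res \<phi> (nb w) (Mst w c)) = card (Res \<phi> (nb a) (Mst a c0))"
      using Res_transfer[OF a w c] by blast
    have i: "bj c0 \<in> {1..d}" using bj c0(1) bij_betwE by blast
    have "inv_into (nb a) bj (bj c0) = c0" using bj c0(1) bij_betw_inv_into_left by fast
    hence "card {\<sigma> \<in> local_action G V E \<phi> a d bj. \<sigma> (bj c0) = bj c0} = card (Res \<phi> (nb a) (Mst a c0))"
      using la_card[OF a bj i] by simp
    moreover have "\<not> p dvd card {\<sigma> \<in> local_action G V E \<phi> a d bj. \<sigma> (bj c0) = bj c0}"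
      using nh i by blast
    ultimately show ?thesis using c0(2) by simp
  qed
  show False using core[OF T stab a p hyp] pl by blast
qed

end

theorem mainTheorem18:
  fixes G :: "('g, 'b) monoid_scheme" and T :: "'g topology"
    and V :: "'v set" and E :: "'v \<Rightarrow> 'v \<Rightarrow> bool" and \<phi> :: "'g \<Rightarrow> 'v \<Rightarrow> 'v"
    and d :: nat and p :: nat
  assumes "tdlc_group G T"
    and "\<not> compactin T (carrier G)"
    and "compactly_generated G T"
    and "cayley_abels_graph G T V E \<phi>"
    and "valency E V d"
  shows "(p \<in> local_prime_content (G Mod (action_kernel G V \<phi>))
              (quotient_group_topology G T (action_kernel G V \<phi>))
          \<longrightarrow> (\<forall>a \<in> V. \<forall>bj. bij_betw bj (neighbours E V a) {1..d} \<longrightarrow>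
                (\<exists>i \<in> {1..d}. p dvd card {\<sigma> \<in> local_action G V E \<phi> a d bj. \<sigma> i = i})))
       \<and> finite (local_prime_content (G Mod (action_kernel G V \<phi>))
              (quotient_group_topology G T (action_kernel G V \<phi>)))"
proof -
  have T: "topological_group G T" using assms(1) unfolding tdlc_group_def by auto
  have C: "V \<noteq> {}" "\<And>x y. E x y \<Longrightarrow> x \<in> V \<and> y \<in> V" "\<And>x y. E x y \<Longrightarrow> E y x"
    "\<And>x. x \<in> V \<Longrightarrow> finite (neighbours E V x)" "\<And>x y. x \<in> V \<Longrightarrow> y \<in> V \<Longrightarrow> E\<^sup>*\<^sup>* x y"
    "group_action G V \<phi>"
    "\<And>g x y. g \<in> carrier G \<Longrightarrow> x \<in> V \<Longrightarrow> y \<in> V \<Longrightarrow> E (\<phi> g x) (\<phi> g y) \<longleftrightarrow> E x y"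
    "\<And>x y. x \<in> V \<Longrightarrow> y \<in> V \<Longrightarrow> \<exists>g\<in>carrier G. \<phi> g x = y"
    "\<And>b. b \<in> V \<Longrightarrow> compactin T (stabilizer G \<phi> b) \<and> openin T (stabilizer G \<phi> b)"
    using assms(4) unfolding cayley_abels_graph_def by blast+
  interpret cag G V \<phi> E
    by (rule cag.intro[OF C(6)]) (unfold cag_axioms_def, use C in blast)
  let ?L = "local_prime_content (G Mod (action_kernel G V \<phi>)) (quotient_group_topology G T (action_kernel G V \<phi>))"
  have P1: "\<forall>a \<in> V. \<forall>bj. bij_betw bj (neighbours E V a) {1..d} \<longrightarrow>
                (\<exists>i \<in> {1..d}. q dvd card {\<sigma> \<in> local_action G V E \<phi> a d bj. \<sigma> i = i})"
    if q: "q \<in> ?L" for q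
    using part1[OF T C(9) q] by blast
  obtain a where a: "a \<in> V" using C(1) by blast
  have fa: "finite (nb a)" using C(4) a by simp
  have ca: "card (nb a) = d" using assms(5) a unfolding valency_def by simp
  obtain bj where bj: "bij_betw bj (nb a) {1..d}"
    using finite_same_card_bij[OF fa, of "{1..d}"] ca by auto
  define Bd where "Bd = card (nb a \<rightarrow>\<^sub>E nb a)"
  have "?L \<subseteq> {..Bd}"
  proof
    fix q assume q: "q \<in> ?L"
    obtain i where i: "i \<in> {1..d}" "q dvd card {\<sigma> \<in> local_action G V E \<phi> a d bj. \<sigma> i = i}"
      using P1[OF q] a bj by blast
    define c0 where "c0 = inv_into (nb a) bj i"
    have c0: "c0 \<in> nb a" unfolding c0_def using bj i by (metis bij_betw_def inv_into_into)
    have c0V: "c0 \<in> V" using c0 nb_sub by auto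
    have eqc: "card {\<sigma> \<in> local_action G V E \<phi> a d bj. \<sigma> i = i} = card (Res \<phi> (nb a) (Mst a c0))"
      using la_card[OF a bj i(1)] unfolding c0_def .
    have sub: "Res \<phi> (nb a) (Mst a c0) \<subseteq> nb a \<rightarrow>\<^sub>E nb a"
    proof
      fix f assume "f \<in> Res \<phi> (nb a) (Mst a c0)"
      then obtain g where g: "g \<in> Mst a c0" "f = restrict (\<phi> g) (nb a)" unfolding Res_def by auto
      have gs: "g \<in> stabilizer G \<phi> a" using g unfolding Mst_def by auto
      show "f \<in> nb a \<rightarrow>\<^sub>E nb a" unfolding g(2) restrict_PiE_iff using nb_stab[OF gs a] by blast
    qed
    have fin: "finite (nb a \<rightarrow>\<^sub>E nb a)" using fa by (intro finite_PiE) auto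
    have "\<one>\<^bsub>G\<^esub> \<in> Mst a c0" using subgroup.one_closed[OF Mst_subgroup[OF a c0V]] .
    hence ne: "Res \<phi> (nb a) (Mst a c0) \<noteq> {}" unfolding Res_def by auto
    have "card (Res \<phi> (nb a) (Mst a c0)) > 0" using ne finite_subset[OF sub fin] by (simp add: card_gt_0_iff)
    hence "q \<le> card (Res \<phi> (nb a) (Mst a c0))" using i(2) eqc by (simp add: dvd_imp_le)
    also have "\<dots> \<le> Bd" unfolding Bd_def using card_mono[OF fin sub] .
    finally show "q \<in> {..Bd}" by simp
  qed
  hence "finite ?L" using finite_subset by blast
  thus ?thesis using P1 by blast
qed


end
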